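(* Let $(\Omega,\mathcal F)$ be a measurable space with at least three pairwise disjoint non-null events and $\succeq$ a preference order on $\mathcal L^\infty(\Omega,\mathcal F)$ satisfying (SM), (PC), (ST). Let $(\mathbb u,\mathbb P)$ be a pair where $\mathbb P$ is a probability on $\mathcal F$ with $\mathcal N_\succeq=\{\mathbb P=0\}$, $\mathbb u$ is $\mathcal F$-regular with $\mathbb u(\cdot,x)\in\mathcal L^1(\Omega,\mathcal F,\mathbb P)$ for all $x$, and $f\succeq g\iff\int\mathbb u(\omega,f(\omega))d\mathbb P\ge\int\mathbb u(\omega,g(\omega))d\mathbb P$. Then for every sub-$\sigma$-algebra $\mathcal G\subseteq\mathcal F$ and every $f\in\mathcal L^\infty(\Omega,\mathcal F)$, $\mathfrak m(f\mid\mathcal G)\neq\varnothing$, and there exist: (1) a $\mathcal G$-regular function $\mathbb u_{\mathcal G}:\Omega\times\mathbb R\to\mathbb R$ such that for every $x\in\mathbb R$, $\mathbb u_{\mathcal G}(\cdot,x)\in\mathcal L^1(\Omega,\mathcal G,\mathbb P)$ and $\mathbb u_{\mathcal G}(\cdot,x)$ is a version of $\mathbb E_{\mathbb P}[\mathbb u(\cdot,x)\mid\mathcal G]$; (2) a version $g$ of $\mathbb E_{\mathbb P}[\mathbb u(\cdot,f(\cdot))\mid\mathcal G]$ such that $\omega\mapsto\Phi_{\mathcal G}(\omega,g(\omega))$ belongs to $\mathfrak m(f\mid\mathcal G)$, where $\Phi_{\mathcal G}:\Omega\times\mathbb R\to[-\infty,+\infty]$, $\Phi_{\mathcal G}(\omega,x):=\inf\{y\in\mathbb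 R:\mathbb u_{\mathcal G}(\omega,y)>x\}$, is $\mathcal G\otimes\mathcal B_{\mathbb R}$-measurable.
   Context: $\mathcal L^\infty(\Omega,\mathcal F)$: bounded $\mathcal F$-measurable real functions. Preference order: complete transitive relation; $\succ,\sim$ as usual. Null events $\mathcal N_\succeq=\{A\in\mathcal F: f1_A+g1_{A^c}\sim g\ \forall f,g\}$. (SM): for non-null $A$, every $f$ and constants $x>y$: $x1_A+f1_{A^c}\succ y1_A+f1_{A^c}$. (ST): if $f1_A+h1_{A^c}\succeq g1_A+h1_{A^c}$ then $f1_A+\tilde h1_{A^c}\succeq g1_A+\tilde h1_{A^c}$ for every $\tilde h$. (PC): for uniformly bounded $f_n\to f$ pointwise and $g\succ f$ (resp. $f\succ g$) there is $N$ with $g\succ f_n$ (resp. $f_n\succ g$) for $n>N$. Conditional Chisini mean: $\mathfrak m(f\mid\mathcal G)=\{g\in\mathcal L^\infty(\Omega,\mathcal G): f1_A\sim g1_A\ \forall A\in\mathcal G\}$. A function $\varphi$ is $\mathcal G$-regular if $\varphi(\omega,\cdot)$ is continuous and strictly increasing for every $\omega$, $\varphi(\omega,0)=0$ for all $\omega$, and $\varphi$ is $\mathcal G\otimes\mathcal B_{\mathbb R}$-measurable. *)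

theory Defs
  imports "HOL-Probability.Probability"
begin

definition Linf :: "'a measure \<Rightarrow> ('a \<Rightarrow> real) set" where
  "Linf M = {f. f \<in> borel_measurable M \<and> (\<exists>B. \<forall>\<omega>\<in>space M. \<bar>f \<omega>\<bar> \<le> B)}"

definition mix :: "'a set \<Rightarrow> ('a \<Rightarrow> real) \<Rightarrow> ('a \<Rightarrow> real) \<Rightarrow> ('a \<Rightarrow> real)" where
  "mix A f g = (\<lambda>\<omega>. if \<omega> \<in> A then f \<omega> else g \<omega>)"

definition pstrict :: "(('a \<Rightarrow> real) \<Rightarrow> ('a \<Rightarrow> real) \<Rightarrow> bool) \<Rightarrow> ('a \<Rightarrow> real) \<Rightarrow> ('a \<Rightarrow> real) \<Rightarrow> bool" where
  "pstrict R f g \<longleftrightarrow> R f g \<and> \<not> R g f"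

definition pindiff :: "(('a \<Rightarrow> real) \<Rightarrow> ('a \<Rightarrow> real) \<Rightarrow> bool) \<Rightarrow> ('a \<Rightarrow> real) \<Rightarrow> ('a \<Rightarrow> real) \<Rightarrow> bool" where
  "pindiff R f g \<longleftrightarrow> R f g \<and> R g f"

definition preference_order :: "'a measure \<Rightarrow> (('a \<Rightarrow> real) \<Rightarrow> ('a \<Rightarrow> real) \<Rightarrow> bool) \<Rightarrow> bool" where
  "preference_order M R \<longleftrightarrow>
     (\<forall>f\<in>Linf M. \<forall>g\<in>Linf M. R f g \<or> R g f) \<and>
     (\<forall>f\<in>Linf M. \<forall>g\<in>Linf M. \<forall>h\<in>Linf M. R f g \<longrightarrow> R g h \<longrightarrow> R f h)"

definition null_events :: "'a measure \<Rightarrow> (('a \<Rightarrow> real) \<Rightarrow> ('a \<Rightarrow> real) \<Rightarrow> bool) \<Rightarrow> 'a set set" where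
  "null_events M R = {A \<in> sets M. \<forall>f\<in>Linf M. \<forall>g\<in>Linf M. pindiff R (mix A f g) g}"

definition SM :: "'a measure \<Rightarrow> (('a \<Rightarrow> real) \<Rightarrow> ('a \<Rightarrow> real) \<Rightarrow> bool) \<Rightarrow> bool" where
  "SM M R \<longleftrightarrow> (\<forall>A\<in>sets M. A \<notin> null_events M R \<longrightarrow>
     (\<forall>f\<in>Linf M. \<forall>x y::real. x > y \<longrightarrow> pstrict R (mix A (\<lambda>_. x) f) (mix A (\<lambda>_. y) f)))"

definition ST :: "'a measure \<Rightarrow> (('a \<Rightarrow> real) \<Rightarrow> ('a \<Rightarrow> real) \<Rightarrow> bool) \<Rightarrow> bool" where
  "ST M R \<longleftrightarrow> (\<forall>A\<in>sets M. \<forall>f\<in>Linf M. \<forall>g\<in>Linf M. \<forall>h\<in>Linf M. \<forall>h'\<in>Linf M.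
     R (mix A f h) (mix A g h) \<longrightarrow> R (mix A f h') (mix A g h'))"

definition PC :: "'a measure \<Rightarrow> (('a \<Rightarrow> real) \<Rightarrow> ('a \<Rightarrow> real) \<Rightarrow> bool) \<Rightarrow> bool" where
  "PC M R \<longleftrightarrow> (\<forall>fs :: nat \<Rightarrow> 'a \<Rightarrow> real. \<forall>f\<in>Linf M. \<forall>g\<in>Linf M.
     (\<forall>n. fs n \<in> Linf M) \<and> (\<exists>B. \<forall>n. \<forall>\<omega>\<in>space M. \<bar>fs n \<omega>\<bar> \<le> B) \<and>
     (\<forall>\<omega>\<in>space M. (\<lambda>n. fs n \<omega>) \<longlonglongrightarrow> f \<omega>) \<longrightarrow>
       (pstrict R g f \<longrightarrow> (\<exists>N. \<forall>n>N. pstrict R g (fs n))) \<and>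
       (pstrict R f g \<longrightarrow> (\<exists>N. \<forall>n>N. pstrict R (fs n) g)))"

definition chisini :: "'a measure \<Rightarrow> (('a \<Rightarrow> real) \<Rightarrow> ('a \<Rightarrow> real) \<Rightarrow> bool) \<Rightarrow> ('a \<Rightarrow> real) \<Rightarrow> ('a \<Rightarrow> real) set" where
  "chisini G R f = {g \<in> Linf G. \<forall>A\<in>sets G.
     pindiff R (\<lambda>\<omega>. f \<omega> * indicator A \<omega>) (\<lambda>\<omega>. g \<omega> * indicator A \<omega>)}"

definition regular :: "'a measure \<Rightarrow> ('a \<Rightarrow> real \<Rightarrow> real) \<Rightarrow> bool" where
  "regular G \<phi> \<longleftrightarrow>
     (\<forall>\<omega>\<in>space G. continuous_on UNIV (\<phi> \<omega>) \<and> strict_mono (\<phi> \<omega>) \<and> \<phi> \<omega> 0 = 0) \<and>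
     case_prod \<phi> \<in> borel_measurable (G \<Otimes>\<^sub>M borel)"

definition cond_exp_version :: "'a measure \<Rightarrow> 'a measure \<Rightarrow> ('a \<Rightarrow> real) \<Rightarrow> ('a \<Rightarrow> real) \<Rightarrow> bool" where
  "cond_exp_version P G X h \<longleftrightarrow>
     h \<in> borel_measurable G \<and> integrable P h \<and>
     (\<forall>A\<in>sets G. (LINT \<omega>:A|P. h \<omega>) = (LINT \<omega>:A|P. X \<omega>))"

definition PhiG :: "('a \<Rightarrow> real \<Rightarrow> real) \<Rightarrow> 'a \<Rightarrow> real \<Rightarrow> ereal" where
  "PhiG uG \<omega> x = Inf (ereal ` {y. uG \<omega> y > x})"

end

theory Submission
  imports Defs
begin

definition dy :: "nat \<Rightarrow> real \<Rightarrow> real" where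
  "dy n x = of_int \<lfloor>x * 2^n\<rfloor> / 2^n"

definition isdy :: "real \<Rightarrow> bool" where
  "isdy x \<longleftrightarrow> (\<exists>k::int. \<exists>n::nat. x = of_int k / 2^n)"

lemma dy_le: "dy n x \<le> x"
proof -
  have "of_int \<lfloor>x * 2^n\<rfloor> \<le> x * 2^n" by simp
  then show ?thesis unfolding dy_def by (simp add: divide_le_eq)
qed

lemma dy_gt: "x < dy n x + 1/2^n"
proof -
  have "x * 2^n < of_int \<lfloor>x * 2^n\<rfloor> + 1" by linarith
  then have "x < (of_int \<lfloor>x * 2^n\<rfloor> + 1) / 2^n" by (simp add: less_divide_eq)
  then show ?thesis unfolding dy_def by (simp add: add_divide_distrib)
qed

lemma isdy_dy: "isdy (dy n x)" unfolding isdy_def dy_def by blast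

lemma dy_mono_Suc: "dy n x \<le> dy (Suc n) x"
proof -
  have "2 * of_int \<lfloor>x * 2^n\<rfloor> \<le> x * 2^(Suc n)" using of_int_floor_le[of "x*2^n"] by simp
  then have "2 * \<lfloor>x * 2^n\<rfloor> \<le> \<lfloor>x * 2^(Suc n)\<rfloor>" by (simp add: le_floor_iff)
  then have "real_of_int (2 * \<lfloor>x * 2^n\<rfloor>) \<le> of_int \<lfloor>x * 2^(Suc n)\<rfloor>" by linarith
  then show ?thesis unfolding dy_def by (simp add: divide_simps)
qed

lemma dy_incseq: "incseq (\<lambda>n. dy n x)"
  by (rule incseq_SucI) (rule dy_mono_Suc)

lemma dy_exact: assumes "m \<le> n" shows "dy n (of_int k / 2^m) = of_int k / 2^m"
proof -
  have "(of_int k / 2^m) * (2::real)^n = of_int (k * 2^(n-m))"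
  proof -
    have "(2::real)^n = 2^m * 2^(n-m)" using assms by (simp flip: power_add)
    then show ?thesis by simp
  qed
  then have "\<lfloor>(of_int k / 2^m) * (2::real)^n\<rfloor> = k * 2^(n-m)"
    by (metis floor_of_int of_int_numeral of_int_power)
  then have "dy n (of_int k / 2^m) = of_int (k * 2^(n-m)) / 2^n" unfolding dy_def by simp
  also have "\<dots> = of_int k * 2^(n-m) / (2^m * 2^(n-m))"
    using assms by (simp flip: power_add)
  also have "\<dots> = of_int k / 2^m" by simp
  finally show ?thesis .
qed

lemma dy_tendsto: "(\<lambda>n. dy n x) \<longlonglongrightarrow> x"
proof -
  have "(\<lambda>n. x - 1/2^n) \<longlonglongrightarrow> x - 0"
    by (intro tendsto_diff tendsto_const) (simp add: LIMSEQ_divide_realpow_zero)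
  moreover have "(\<lambda>n. x) \<longlonglongrightarrow> x" by simp
  moreover have "\<forall>\<^sub>F n in sequentially. x - 1/2^n \<le> dy n x"
    using dy_gt[of x] by (auto intro!: eventuallyI less_imp_le simp: algebra_simps)
  moreover have "\<forall>\<^sub>F n in sequentially. dy n x \<le> x" by (auto intro!: eventuallyI dy_le)
  ultimately show ?thesis
    using real_tendsto_sandwich[of "\<lambda>n. x - 1/2^n" "\<lambda>n. dy n x" sequentially "\<lambda>n. x" x] by simp
qed

locale ctx =
  fixes P G :: "'a measure" and u :: "'a \<Rightarrow> real \<Rightarrow> real"
  assumes prob: "prob_space P" and sub: "subalgebra P G"
  and ureg: "\<And>\<omega>. \<omega> \<in> space P \<Longrightarrow> continuous_on UNIV (u \<omega>) \<and> strict_mono (u \<omega>) \<and> u \<omega> 0 = 0"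
  and umeas: "case_prod u \<in> borel_measurable (P \<Otimes>\<^sub>M borel)"
  and uint: "\<And>x. integrable P (\<lambda>\<omega>. u \<omega> x)"

sublocale ctx \<subseteq> ps: prob_space P by (rule prob)

sublocale ctx \<subseteq> fms: finite_measure_subalgebra P G
  by unfold_locales (rule sub)

context ctx begin

lemma spaceG: "space G = space P" using sub by (simp add: subalgebra_def)
lemma setsG: "A \<in> sets G \<Longrightarrow> A \<in> sets P" using sub by (auto simp add: subalgebra_def)

lemma u_meas[measurable]: "(\<lambda>\<omega>. u \<omega> x) \<in> borel_measurable P"
proof -
  have "(\<lambda>\<omega>. (\<omega>, x)) \<in> measurable P (P \<Otimes>\<^sub>M borel)" by measurable
  from measurable_comp[OF this umeas] show ?thesis by (simp add: o_def)
qed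

lemma u_comp_meas[measurable]: "f \<in> borel_measurable P \<Longrightarrow> (\<lambda>\<omega>. u \<omega> (f \<omega>)) \<in> borel_measurable P"
proof -
  assume [measurable]: "f \<in> borel_measurable P"
  have "(\<lambda>\<omega>. (\<omega>, f \<omega>)) \<in> measurable P (P \<Otimes>\<^sub>M borel)" by measurable
  from measurable_comp[OF this umeas] show ?thesis by (simp add: o_def)
qed

lemma u_mono: "\<omega> \<in> space P \<Longrightarrow> x < y \<Longrightarrow> u \<omega> x < u \<omega> y"
  using ureg by (auto simp: strict_mono_def)
lemma u_mono_le: "\<omega> \<in> space P \<Longrightarrow> x \<le> y \<Longrightarrow> u \<omega> x \<le> u \<omega> y"
  using u_mono by (cases "x = y") (auto intro: less_imp_le)
lemma u_zero: "\<omega> \<in> space P \<Longrightarrow> u \<omega> 0 = 0" using ureg by auto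
lemma u_cont: "\<omega> \<in> space P \<Longrightarrow> isCont (u \<omega>) x"
  using ureg by (auto simp: continuous_on_eq_continuous_at)

definition v :: "real \<Rightarrow> 'a \<Rightarrow> real" where
  "v q = real_cond_exp P G (\<lambda>\<omega>. u \<omega> q)"

lemma v_measG[measurable]: "v q \<in> borel_measurable G" unfolding v_def by simp
lemma v_meas[measurable]: "v q \<in> borel_measurable P" unfolding v_def by simp
lemma v_int: "integrable P (v q)" unfolding v_def by (rule fms.real_cond_exp_int(1)[OF uint])
lemma v_intA: "A \<in> sets G \<Longrightarrow> (\<integral>\<omega>\<in>A. u \<omega> q \<partial>P) = (\<integral>\<omega>\<in>A. v q \<omega> \<partial>P)"
  unfolding v_def by (rule fms.real_cond_exp_intA[OF uint])

definition good :: "'a set" where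
  "good = {\<omega> \<in> space G.
     (\<forall>k::int. \<forall>n::nat. \<forall>k'::int. \<forall>n'::nat. of_int k / 2^n < of_int k' / (2::real)^n' \<longrightarrow>
         v (of_int k / 2^n) \<omega> < v (of_int k' / 2^n') \<omega>) \<and>
     v 0 \<omega> = 0 \<and>
     (\<forall>K::nat. \<forall>m::nat. \<exists>n::nat. \<forall>i<2*K*2^n.
         v (- real K + real (Suc i) / 2^n) \<omega> - v (- real K + real i / 2^n) \<omega> < 1 / (real m + 1))}"

lemma good_sets: "good \<in> sets G"
  unfolding good_def by measurable

lemma good_space: "good \<subseteq> space P" unfolding good_def using spaceG by auto

end

lemma isdy_int: "isdy (of_int k)" unfolding isdy_def by (rule exI[of _ k], rule exI[of _ 0]) simp
lemma isdy_0: "isdy 0" using isdy_int[of 0] by simp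

lemma isdy_grid: "isdy (- real K + real i / 2^n)"
proof -
  have "- real K + real i / 2^n = of_int (int i - int K * 2^n) / 2^n" by (simp add: field_simps)
  then show ?thesis unfolding isdy_def by blast
qed

context ctx begin

definition uG :: "'a \<Rightarrow> real \<Rightarrow> real" where
  "uG \<omega> x = (if \<omega> \<in> good then lim (\<lambda>n. v (dy n x) \<omega>) else x)"

lemma good_strict: assumes "\<omega> \<in> good" "isdy a" "isdy b" "a < b" shows "v a \<omega> < v b \<omega>"
  using assms unfolding good_def isdy_def by blast

lemma good_mono: assumes "\<omega> \<in> good" "isdy a" "isdy b" "a \<le> b" shows "v a \<omega> \<le> v b \<omega>"
  using good_strict[OF assms(1-3)] assms(4) by (cases "a = b") (auto intro: less_imp_le)

lemma good_v0: "\<omega> \<in> good \<Longrightarrow> v 0 \<omega> = 0" unfolding good_def by auto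

lemma good_grid: "\<omega> \<in> good \<Longrightarrow> \<exists>n. \<forall>i<2*K*2^n.
         v (- real K + real (Suc i) / 2^n) \<omega> - v (- real K + real i / 2^n) \<omega> < 1 / (real m + 1)"
  unfolding good_def by auto

lemma good_inc: "\<omega> \<in> good \<Longrightarrow> incseq (\<lambda>n. v (dy n x) \<omega>)"
  by (intro incseq_SucI good_mono isdy_dy dy_mono_Suc)

lemma good_bdd: "\<omega> \<in> good \<Longrightarrow> v (dy n x) \<omega> \<le> v (of_int (\<lfloor>x\<rfloor>+1)) \<omega>"
proof -
  assume g: "\<omega> \<in> good"
  have "dy n x \<le> of_int (\<lfloor>x\<rfloor>+1)" using dy_le[of n x] by linarith
  then show ?thesis by (rule good_mono[OF g isdy_dy isdy_int])
qed

lemma uG_tendsto: assumes g: "\<omega> \<in> good" shows "(\<lambda>n. v (dy n x) \<omega>) \<longlonglongrightarrow> uG \<omega> x"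
proof -
  have "\<forall>i. v (dy i x) \<omega> \<le> v (of_int (\<lfloor>x\<rfloor>+1)) \<omega>" using good_bdd[OF g] by blast
  from incseq_convergent[OF good_inc[OF g] this]
  obtain L where L: "(\<lambda>n. v (dy n x) \<omega>) \<longlonglongrightarrow> L" by blast
  then have "lim (\<lambda>n. v (dy n x) \<omega>) = L" by (rule limI)
  with L g show ?thesis unfolding uG_def by simp
qed

lemma uG_ge: "\<omega> \<in> good \<Longrightarrow> v (dy n x) \<omega> \<le> uG \<omega> x"
  by (rule incseq_le[OF good_inc uG_tendsto])

lemma uG_le: assumes g: "\<omega> \<in> good" and "isdy b" "x < b" shows "uG \<omega> x \<le> v b \<omega>"
proof (rule LIMSEQ_le_const2[OF uG_tendsto[OF g]])
  show "\<exists>N. \<forall>n\<ge>N. v (dy n x) \<omega> \<le> v b \<omega>"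
  proof (intro exI[of _ 0] allI impI good_mono[OF g] isdy_dy \<open>isdy b\<close>)
    fix n show "dy n x \<le> b" using dy_le[of n x] \<open>x < b\<close> by linarith
  qed
qed

lemma uG_dy: assumes g: "\<omega> \<in> good" and d: "isdy d" shows "uG \<omega> d = v d \<omega>"
proof (rule antisym)
  show "uG \<omega> d \<le> v d \<omega>"
  proof (rule LIMSEQ_le_const2[OF uG_tendsto[OF g]])
    show "\<exists>N. \<forall>n\<ge>N. v (dy n d) \<omega> \<le> v d \<omega>"
      by (intro exI[of _ 0] allI impI good_mono[OF g] isdy_dy d dy_le)
  qed
  obtain k m where "d = of_int k / 2^m" using d unfolding isdy_def by blast
  then have "dy m d = d" using dy_exact[of m m k] by simp
  then show "v d \<omega> \<le> uG \<omega> d" using uG_ge[OF g, of m d] by simp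
qed

lemma uG_zero: "\<omega> \<in> good \<Longrightarrow> uG \<omega> 0 = 0"
  using uG_dy[OF _ isdy_0] good_v0 by simp

lemma uG_strict: assumes g: "\<omega> \<in> good" and xy: "x < y" shows "uG \<omega> x < uG \<omega> y"
proof -
  obtain N where N: "(1/2::real)^N < (y - x)/2"
    using real_arch_pow_inv[of "(y-x)/2" "1/2"] xy by auto
  have "(1/2::real)^N = 1 / 2^N" by (rule power_one_over)
  with N have N': "2 / 2^N < y - x" by simp
  define b where "b = dy N y"
  define a where "a = b - 1/2^N"
  have adef: "a = of_int (\<lfloor>y * 2^N\<rfloor> - 1) / 2^N"
    unfolding a_def b_def dy_def by (simp add: field_simps)
  have "isdy a" unfolding adef isdy_def by blast
  have "isdy b" unfolding b_def by (rule isdy_dy)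
  have "y < b + 1/2^N" unfolding b_def by (rule dy_gt)
  then have "x < a" unfolding a_def using N' by simp
  have "a < b" unfolding a_def by simp
  have "uG \<omega> x \<le> v a \<omega>" by (rule uG_le[OF g \<open>isdy a\<close> \<open>x < a\<close>])
  also have "\<dots> < v b \<omega>" by (rule good_strict[OF g \<open>isdy a\<close> \<open>isdy b\<close> \<open>a < b\<close>])
  also have "\<dots> \<le> uG \<omega> y" unfolding b_def by (rule uG_ge[OF g])
  finally show ?thesis .
qed

end

context ctx begin

lemma uG_cont: assumes g: "\<omega> \<in> good" shows "isCont (uG \<omega>) x"
  unfolding isCont_def LIM_eq
proof (intro allI impI)
  fix \<epsilon> :: real assume "\<epsilon> > 0"
  then have "\<epsilon>/3 > 0" by simp
  from ex_inverse_of_nat_less[OF this] obtain N::nat where N: "N > 0" "inverse (real N) < \<epsilon>/3" by blast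
  define m where "m = N - 1"
  have "real m + 1 = real N" unfolding m_def using N by simp
  then have m': "1 / (real m + 1) < \<epsilon>/3" using N by (simp add: inverse_eq_divide)
  define K :: nat where "K = nat \<lceil>\<bar>x\<bar>\<rceil> + 2"
  have K: "\<bar>x\<bar> + 2 \<le> real K" unfolding K_def by linarith
  obtain n where n: "\<And>i. i<2*K*2^n \<Longrightarrow>
         v (- real K + real (Suc i) / 2^n) \<omega> - v (- real K + real i / 2^n) \<omega> < 1 / (real m + 1)"
    using good_grid[OF g, of K m] by blast
  define j where "j = \<lfloor>x*2^n\<rfloor>"
  define t where "t i = - real K + real i / 2^n" for i :: nat
  have p: "(2::real)^n \<ge> 1" by simp
  have j1: "of_int j \<le> x * 2^n" unfolding j_def by simp
  have j2: "x * 2^n < of_int j + 1" unfolding j_def by linarith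
  have xK1: "- (real K - 2) * 2^n \<le> x * 2^n" using K p by (intro mult_right_mono) auto
  have xK2: "x * 2^n \<le> (real K - 2) * 2^n" using K p by (intro mult_right_mono) auto
  have nn: "0 \<le> j - 1 + int K * 2^n"
  proof -
    have e: "real_of_int (j - 1 + int K * 2^n) = of_int j - 1 + real K * 2^n" by simp
    have "x*2^n + real K * 2^n \<ge> 2*2^n" using xK1 by (simp add: algebra_simps)
    then have "of_int j - 1 + real K * 2^n \<ge> 0" using j2 p by linarith
    then have "real_of_int (j - 1 + int K * 2^n) \<ge> 0" using e by linarith
    then show ?thesis by linarith
  qed
  define i0 :: nat where "i0 = nat (j - 1 + int K * 2^n)"
  have i0: "real i0 = of_int j - 1 + real K * 2^n"
    unfolding i0_def using nn by (simp add: of_nat_nat[OF nn] del: of_nat_nat)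
  have i0b: "i0 + 2 < 2*K*2^n"
  proof -
    have a: "x*2^n + 2*2^n \<le> real K*2^n" using xK2 by (simp add: algebra_simps)
    have "real (i0 + 2) = of_int j + 1 + real K * 2^n" using i0 by simp
    also have "\<dots> < real K * 2^n + real K * 2^n" using a j1 p by linarith
    also have "\<dots> = real (2*K*2^n)" by simp
    finally have "real (i0 + 2) < real (2*K*2^n)" .
    then show ?thesis by (simp only: of_nat_less_iff)
  qed
  have t0: "t i0 = (of_int j - 1) / 2^n" unfolding t_def i0 by (simp add: field_simps)
  have t3: "t (i0+3) = (of_int j + 2) / 2^n" unfolding t_def by (simp add: i0 field_simps)
  have tS: "t (Suc i) = - real K + real (Suc i) / 2^n" for i unfolding t_def ..
  have d1: "v (t (Suc i0)) \<omega> - v (t i0) \<omega> < 1/(real m+1)" using n[of i0] i0b unfolding t_def by simp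
  have d2: "v (t (Suc (Suc i0))) \<omega> - v (t (Suc i0)) \<omega> < 1/(real m+1)" using n[of "Suc i0"] i0b unfolding t_def by simp
  have d3: "v (t (i0+3)) \<omega> - v (t (Suc (Suc i0))) \<omega> < 1/(real m+1)"
    using n[of "Suc (Suc i0)"] i0b unfolding t_def by (simp add: numeral_3_eq_3)
  have tot: "v (t (i0+3)) \<omega> - v (t i0) \<omega> < \<epsilon>" using d1 d2 d3 m' by linarith
  have isdyt: "isdy (t i)" for i unfolding t_def by (rule isdy_grid)
  have bnds: "v (t i0) \<omega> \<le> uG \<omega> z \<and> uG \<omega> z \<le> v (t (i0+3)) \<omega>" if z: "\<bar>z - x\<bar> < 1/2^n" for z
  proof
    have "z * 2^n > x * 2^n - 1" using z p by (simp add: abs_less_iff field_simps)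
    then have "j - 1 \<le> \<lfloor>z * 2^n\<rfloor>" using j1 by (simp add: le_floor_iff)
    then have "t i0 \<le> dy n z" unfolding t0 dy_def by (simp add: divide_right_mono)
    then have "v (t i0) \<omega> \<le> v (dy n z) \<omega>" by (rule good_mono[OF g isdyt isdy_dy])
    also have "\<dots> \<le> uG \<omega> z" by (rule uG_ge[OF g])
    finally show "v (t i0) \<omega> \<le> uG \<omega> z" .
    have "z < x + 1/2^n" using z by (simp add: abs_less_iff)
    also have "x + 1/2^n = (x*2^n + 1)/2^n" by (simp add: field_simps)
    also have "\<dots> < (of_int j + 2) / 2^n" by (rule divide_strict_right_mono) (use j2 in linarith, simp)
    finally show "uG \<omega> z \<le> v (t (i0+3)) \<omega>" unfolding t3[symmetric] by (rule uG_le[OF g isdyt])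
  qed
  have bx: "v (t i0) \<omega> \<le> uG \<omega> x \<and> uG \<omega> x \<le> v (t (i0+3)) \<omega>" by (rule bnds) simp
  show "\<exists>s>0. \<forall>y. y \<noteq> x \<and> norm (y - x) < s \<longrightarrow> norm (uG \<omega> y - uG \<omega> x) < \<epsilon>"
  proof (intro exI[of _ "1/2^n"] conjI allI impI)
    show "(0::real) < 1/2^n" by simp
    fix y assume "y \<noteq> x \<and> norm (y - x) < 1/2^n"
    then have "\<bar>y - x\<bar> < 1/2^n" by simp
    from bnds[OF this] bx tot show "norm (uG \<omega> y - uG \<omega> x) < \<epsilon>" by (simp add: abs_less_iff)
  qed
qed

lemma uG_regular_pt: "\<omega> \<in> space P \<Longrightarrow> continuous_on UNIV (uG \<omega>) \<and> strict_mono (uG \<omega>) \<and> uG \<omega> 0 = 0"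
proof (cases "\<omega> \<in> good")
  case True
  then show ?thesis using uG_cont uG_strict uG_zero
    by (auto simp: continuous_on_eq_continuous_at strict_mono_def)
next
  case False
  then have "uG \<omega> = (\<lambda>x. x)" unfolding uG_def by auto
  then show ?thesis by (auto simp: strict_mono_def)
qed

end

context ctx begin

lemma vdy_meas: "(\<lambda>p. v (dy n (snd p)) (fst p)) \<in> borel_measurable (G \<Otimes>\<^sub>M borel)"
proof -
  have g: "(\<lambda>p::'a \<times> real. \<lfloor>snd p * 2^n\<rfloor>) \<in> measurable (G \<Otimes>\<^sub>M borel) (count_space UNIV)"
  proof -
    have "(\<lambda>p::'a \<times> real. snd p * 2^n) \<in> borel_measurable (G \<Otimes>\<^sub>M borel)" by measurable
    from measurable_comp[OF this measurable_real_floor] show ?thesis by (simp add: o_def)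
  qed
  have f: "(\<lambda>p. v (of_int k / 2^n) (fst p)) \<in> borel_measurable (G \<Otimes>\<^sub>M borel)" for k :: int
    by measurable
  have "(\<lambda>p. v (of_int \<lfloor>snd p * (2::real)^n\<rfloor> / 2^n) (fst p)) \<in> borel_measurable (G \<Otimes>\<^sub>M borel)"
    by (rule measurable_compose_countable[where f="\<lambda>k p. v (of_int k / 2^n) (fst p)", OF f g])
  then show ?thesis unfolding dy_def .
qed

lemma uG_meas: "case_prod uG \<in> borel_measurable (G \<Otimes>\<^sub>M borel)"
proof -
  note vdy_meas[measurable] good_sets[measurable]
  have "(\<lambda>p. if fst p \<in> good then lim (\<lambda>n. v (dy n (snd p)) (fst p)) else snd p) \<in> borel_measurable (G \<Otimes>\<^sub>M borel)"
    by measurable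
  moreover have "case_prod uG = (\<lambda>p. if fst p \<in> good then lim (\<lambda>n. v (dy n (snd p)) (fst p)) else snd p)"
    unfolding uG_def by auto
  ultimately show ?thesis by simp
qed

lemma uG_measG[measurable]: "(\<lambda>\<omega>. uG \<omega> x) \<in> borel_measurable G"
proof -
  have "(\<lambda>\<omega>. (\<omega>, x)) \<in> measurable G (G \<Otimes>\<^sub>M borel)" by (rule measurable_Pair2') simp
  from measurable_comp[OF this uG_meas] show ?thesis by (simp add: o_def)
qed

lemma measG_P: "f \<in> borel_measurable G \<Longrightarrow> f \<in> borel_measurable P"
  by (rule measurable_from_subalg[OF sub])

lemma uG_measP[measurable]: "(\<lambda>\<omega>. uG \<omega> x) \<in> borel_measurable P"
  by (rule measG_P[OF uG_measG])

end

context ctx begin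

lemma int_ind: "A \<in> sets P \<Longrightarrow> (\<integral>\<omega>. indicator A \<omega> * c \<partial>P) = measure P A * c"
  by simp

lemma indint: "A \<in> sets P \<Longrightarrow> integrable P (f::'a \<Rightarrow> real) \<Longrightarrow> integrable P (\<lambda>x. indicator A x * f x)"
  using integrable_mult_indicator[of A P f] by simp

lemma indc: "A \<in> sets P \<Longrightarrow> integrable P (\<lambda>x. indicator A x * (c::real))"
  using indint[of A "\<lambda>_. c"] by simp

lemma single_bound:
  assumes ab: "a \<le> b" and e: "\<epsilon> > 0"
  shows "\<epsilon>/2 * measure P {\<omega>\<in>space P. v b \<omega> - v a \<omega> \<ge> \<epsilon>}
     \<le> (\<integral>\<omega>. indicator {\<omega>\<in>space P. u \<omega> b - u \<omega> a \<ge> \<epsilon>/2} \<omega> * (u \<omega> b - u \<omega> a) \<partial>P)"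
proof -
  define S where "S = {\<omega>\<in>space G. v b \<omega> - v a \<omega> \<ge> \<epsilon>}"
  have SG: "S \<in> sets G" unfolding S_def by measurable
  have SP: "S \<in> sets P" using setsG[OF SG] .
  have S_eq: "S = {\<omega>\<in>space P. v b \<omega> - v a \<omega> \<ge> \<epsilon>}" unfolding S_def spaceG ..
  define T where "T = {\<omega>\<in>space P. u \<omega> b - u \<omega> a \<ge> \<epsilon>/2}"
  have TP: "T \<in> sets P" unfolding T_def by measurable
  have iv: "integrable P (\<lambda>\<omega>. v b \<omega> - v a \<omega>)" using v_int by auto
  have iu: "integrable P (\<lambda>\<omega>. u \<omega> b - u \<omega> a)" using uint by auto
  have "(\<integral>\<omega>. indicator S \<omega> * (v b \<omega> - v a \<omega>) \<partial>P) = (\<integral>\<omega>\<in>S. v b \<omega> \<partial>P) - (\<integral>\<omega>\<in>S. v a \<omega> \<partial>P)"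
    unfolding set_lebesgue_integral_def using indint[OF SP v_int]
    by (simp add: right_diff_distrib)
  also have "\<dots> = (\<integral>\<omega>\<in>S. u \<omega> b \<partial>P) - (\<integral>\<omega>\<in>S. u \<omega> a \<partial>P)"
    using v_intA[OF SG] by simp
  also have "\<dots> = (\<integral>\<omega>. indicator S \<omega> * (u \<omega> b - u \<omega> a) \<partial>P)"
    unfolding set_lebesgue_integral_def using indint[OF SP uint]
    by (simp add: right_diff_distrib)
  finally have eq: "(\<integral>\<omega>. indicator S \<omega> * (v b \<omega> - v a \<omega>) \<partial>P) = (\<integral>\<omega>. indicator S \<omega> * (u \<omega> b - u \<omega> a) \<partial>P)" .
  have "measure P S * \<epsilon> = (\<integral>\<omega>. indicator S \<omega> * \<epsilon> \<partial>P)" using SP by simp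
  also have "\<dots> \<le> (\<integral>\<omega>. indicator S \<omega> * (v b \<omega> - v a \<omega>) \<partial>P)"
  proof (rule integral_mono)
    show "integrable P (\<lambda>\<omega>. indicator S \<omega> * \<epsilon>)" using indint[OF SP, of "\<lambda>_. \<epsilon>"] by simp
    show "integrable P (\<lambda>\<omega>. indicator S \<omega> * (v b \<omega> - v a \<omega>))"
      using integrable_mult_indicator[OF SP iv] by simp
    fix \<omega> show "indicator S \<omega> * \<epsilon> \<le> indicator S \<omega> * (v b \<omega> - v a \<omega>)"
      unfolding S_def by (auto simp: indicator_def)
  qed
  also have "\<dots> = (\<integral>\<omega>. indicator S \<omega> * (u \<omega> b - u \<omega> a) \<partial>P)" by (rule eq)
  also have "\<dots> \<le> (\<integral>\<omega>. indicator T \<omega> * (u \<omega> b - u \<omega> a) + indicator S \<omega> * (\<epsilon>/2) \<partial>P)"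
  proof (rule integral_mono)
    show "integrable P (\<lambda>\<omega>. indicator S \<omega> * (u \<omega> b - u \<omega> a))"
      using integrable_mult_indicator[OF SP iu] by simp
    show "integrable P (\<lambda>\<omega>. indicator T \<omega> * (u \<omega> b - u \<omega> a) + indicator S \<omega> * (\<epsilon>/2))"
      using indint[OF TP iu] indc[OF SP, of "\<epsilon>/2"] by (rule Bochner_Integration.integrable_add)
    fix \<omega> assume w: "\<omega> \<in> space P"
    have "u \<omega> a \<le> u \<omega> b" by (rule u_mono_le[OF w ab])
    then show "indicator S \<omega> * (u \<omega> b - u \<omega> a) \<le> indicator T \<omega> * (u \<omega> b - u \<omega> a) + indicator S \<omega> * (\<epsilon>/2)"
      unfolding T_def using w e by (auto simp: indicator_def)
  qed
  also have "\<dots> = (\<integral>\<omega>. indicator T \<omega> * (u \<omega> b - u \<omega> a) \<partial>P) + (\<integral>\<omega>. indicator S \<omega> * (\<epsilon>/2) \<partial>P)"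
    using indint[OF TP iu] indc[OF SP, of "\<epsilon>/2"] by (rule Bochner_Integration.integral_add)
  also have "(\<integral>\<omega>. indicator S \<omega> * (\<epsilon>/2) \<partial>P) = measure P S * (\<epsilon>/2)" by (rule int_ind[OF SP])
  finally have "measure P S * \<epsilon> \<le> (\<integral>\<omega>. indicator T \<omega> * (u \<omega> b - u \<omega> a) \<partial>P) + measure P S * (\<epsilon>/2)" .
  then show ?thesis unfolding S_eq[symmetric] T_def[symmetric] by (simp add: algebra_simps)
qed

end

context ctx begin

definition tg :: "nat \<Rightarrow> nat \<Rightarrow> nat \<Rightarrow> real" where
  "tg K n i = - real K + real i / 2^n"

lemma tg_0: "tg K n 0 = - real K" unfolding tg_def by simp
lemma tg_N: "tg K n (2*K*2^n) = real K" unfolding tg_def by simp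
lemma tg_mono: "tg K n i \<le> tg K n (Suc i)" unfolding tg_def by (simp add: divide_right_mono)
lemma tg_diff: "tg K n (Suc i) - tg K n i = 1/2^n" unfolding tg_def by (simp add: field_simps)
lemma tg_range: "i \<le> 2*K*2^n \<Longrightarrow> tg K n i \<in> {- real K..real K}"
proof -
  assume "i \<le> 2*K*2^n"
  then have "real i \<le> real (2*K*2^n)" by (simp only: of_nat_le_iff)
  then have "real i / 2^n \<le> 2 * real K" by (simp add: divide_le_eq)
  then show ?thesis unfolding tg_def by auto
qed

definition W :: "nat \<Rightarrow> nat \<Rightarrow> real \<Rightarrow> 'a \<Rightarrow> real" where
  "W K n e \<omega> = indicator {\<omega>\<in>space P. \<exists>i<2*K*2^n. u \<omega> (tg K n (Suc i)) - u \<omega> (tg K n i) \<ge> e/2} \<omega>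
      * (u \<omega> (real K) - u \<omega> (- real K))"

lemma W_meas[measurable]: "W K n e \<in> borel_measurable P"
  unfolding W_def by measurable

lemma W_int_tendsto: assumes e: "e > 0" shows "(\<lambda>n. \<integral>\<omega>. W K n e \<omega> \<partial>P) \<longlonglongrightarrow> 0"
proof -
  have "(\<lambda>n. \<integral>\<omega>. W K n e \<omega> \<partial>P) \<longlonglongrightarrow> (\<integral>\<omega>. 0 \<partial>P)"
  proof (rule integral_dominated_convergence[where w="\<lambda>\<omega>. \<bar>u \<omega> (real K) - u \<omega> (- real K)\<bar>"])
    show "(\<lambda>\<omega>. 0::real) \<in> borel_measurable P" by simp
    show "\<And>n. W K n e \<in> borel_measurable P" by simp
    show "integrable P (\<lambda>\<omega>. \<bar>u \<omega> (real K) - u \<omega> (- real K)\<bar>)" using uint by auto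
    show "AE \<omega> in P. norm (W K n e \<omega>) \<le> \<bar>u \<omega> (real K) - u \<omega> (- real K)\<bar>" for n
      unfolding W_def by (auto simp: indicator_def)
    show "AE \<omega> in P. (\<lambda>n. W K n e \<omega>) \<longlonglongrightarrow> 0"
    proof (rule AE_I2)
      fix \<omega> assume w: "\<omega> \<in> space P"
      have "continuous_on {- real K..real K} (u \<omega>)"
        using ureg[OF w] by (auto intro: continuous_on_subset)
      then have "uniformly_continuous_on {- real K..real K} (u \<omega>)"
        by (rule compact_uniformly_continuous) simp
      then obtain d where d: "d > 0" and
        dd: "\<And>x x'. x \<in> {- real K..real K} \<Longrightarrow> x' \<in> {- real K..real K} \<Longrightarrow> dist x' x < d \<Longrightarrow> dist (u \<omega> x') (u \<omega> x) < e/2"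
        unfolding uniformly_continuous_on_def using e by (meson half_gt_zero)
      obtain N where N: "(1/2::real)^N < d" using real_arch_pow_inv[of d "1/2"] d by auto
      have "eventually (\<lambda>n. W K n e \<omega> = 0) sequentially"
      proof (rule eventually_sequentiallyI[of N])
        fix n assume "N \<le> n"
        then have "(1/2::real)^n \<le> (1/2)^N" by (rule power_decreasing) auto
        then have small: "1/2^n < d" using N by (simp add: power_one_over)
        have "\<not> (u \<omega> (tg K n (Suc i)) - u \<omega> (tg K n i) \<ge> e/2)" if i: "i < 2*K*2^n" for i
        proof -
          have "dist (tg K n (Suc i)) (tg K n i) < d" unfolding dist_real_def tg_diff using small by simp
          from dd[OF tg_range tg_range this] i
          have "\<bar>u \<omega> (tg K n (Suc i)) - u \<omega> (tg K n i)\<bar> < e/2" by (simp add: dist_real_def)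
          then show ?thesis using abs_ge_self[of "u \<omega> (tg K n (Suc i)) - u \<omega> (tg K n i)"] by linarith
        qed
        then show "W K n e \<omega> = 0" unfolding W_def by (auto simp: indicator_def)
      qed
      then show "(\<lambda>n. W K n e \<omega>) \<longlonglongrightarrow> 0" by (rule tendsto_eventually)
    qed
  qed
  then show ?thesis by simp
qed

lemma E_bound: assumes e: "e > 0"
  shows "measure P {\<omega>\<in>space P. \<exists>i<2*K*2^n. v (tg K n (Suc i)) \<omega> - v (tg K n i) \<omega> \<ge> e}
     \<le> 2/e * (\<integral>\<omega>. W K n e \<omega> \<partial>P)"
proof -
  define N where "N = 2*K*2^n"
  define S where "S i = {\<omega>\<in>space P. v (tg K n (Suc i)) \<omega> - v (tg K n i) \<omega> \<ge> e}" for i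
  define T where "T i = {\<omega>\<in>space P. u \<omega> (tg K n (Suc i)) - u \<omega> (tg K n i) \<ge> e/2}" for i
  have SP: "S i \<in> sets P" for i unfolding S_def by measurable
  have TP: "T i \<in> sets P" for i unfolding T_def by measurable
  have iu: "integrable P (\<lambda>\<omega>. u \<omega> (tg K n (Suc i)) - u \<omega> (tg K n i))" for i using uint by auto
  have swap: "(\<Sum>i<N. (\<integral>\<omega>. indicator (T i) \<omega> * (u \<omega> (tg K n (Suc i)) - u \<omega> (tg K n i)) \<partial>P))
     = (\<integral>\<omega>. (\<Sum>i<N. indicator (T i) \<omega> * (u \<omega> (tg K n (Suc i)) - u \<omega> (tg K n i))) \<partial>P)"
    by (rule Bochner_Integration.integral_sum[symmetric]) (rule indint[OF TP iu])
  have "{\<omega>\<in>space P. \<exists>i<N. v (tg K n (Suc i)) \<omega> - v (tg K n i) \<omega> \<ge> e} = (\<Union>i\<in>{..<N}. S i)"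
    unfolding S_def by auto
  then have "measure P {\<omega>\<in>space P. \<exists>i<N. v (tg K n (Suc i)) \<omega> - v (tg K n i) \<omega> \<ge> e}
      \<le> (\<Sum>i<N. measure P (S i))"
    using measure_UNION_le[of "{..<N}" S P] SP by simp
  also have "\<dots> \<le> (\<Sum>i<N. 2/e * (\<integral>\<omega>. indicator (T i) \<omega> * (u \<omega> (tg K n (Suc i)) - u \<omega> (tg K n i)) \<partial>P))"
  proof (rule sum_mono)
    fix i
    have "e/2 * measure P (S i) \<le> (\<integral>\<omega>. indicator (T i) \<omega> * (u \<omega> (tg K n (Suc i)) - u \<omega> (tg K n i)) \<partial>P)"
      unfolding S_def T_def by (rule single_bound[OF tg_mono e])
    then show "measure P (S i) \<le> 2/e * (\<integral>\<omega>. indicator (T i) \<omega> * (u \<omega> (tg K n (Suc i)) - u \<omega> (tg K n i)) \<partial>P)"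
      using e by (simp add: field_simps)
  qed
  also have "\<dots> = 2/e * (\<Sum>i<N. (\<integral>\<omega>. indicator (T i) \<omega> * (u \<omega> (tg K n (Suc i)) - u \<omega> (tg K n i)) \<partial>P))"
    by (simp add: sum_distrib_left)
  also have "\<dots> = 2/e * (\<integral>\<omega>. (\<Sum>i<N. indicator (T i) \<omega> * (u \<omega> (tg K n (Suc i)) - u \<omega> (tg K n i))) \<partial>P)"
    using swap by simp
  also have "\<dots> \<le> 2/e * (\<integral>\<omega>. W K n e \<omega> \<partial>P)"
  proof (rule mult_left_mono)
    show "0 \<le> 2/e" using e by simp
    show "(\<integral>\<omega>. (\<Sum>i<N. indicator (T i) \<omega> * (u \<omega> (tg K n (Suc i)) - u \<omega> (tg K n i))) \<partial>P) \<le> (\<integral>\<omega>. W K n e \<omega> \<partial>P)"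
    proof (rule integral_mono)
      show "integrable P (\<lambda>\<omega>. \<Sum>i<N. indicator (T i) \<omega> * (u \<omega> (tg K n (Suc i)) - u \<omega> (tg K n i)))"
        by (rule Bochner_Integration.integrable_sum) (rule indint[OF TP iu])
      show "integrable P (W K n e)"
      proof -
        have A: "{\<omega>\<in>space P. \<exists>i<2*K*2^n. u \<omega> (tg K n (Suc i)) - u \<omega> (tg K n i) \<ge> e/2} \<in> sets P" by measurable
        have "integrable P (\<lambda>\<omega>. u \<omega> (real K) - u \<omega> (- real K))" using uint by auto
        from indint[OF A this] show ?thesis unfolding W_def .
      qed
      fix \<omega> assume w: "\<omega> \<in> space P"
      have nn: "0 \<le> u \<omega> (tg K n (Suc i)) - u \<omega> (tg K n i)" for i using u_mono_le[OF w tg_mono] by simp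
      have tel: "(\<Sum>i<N. u \<omega> (tg K n (Suc i)) - u \<omega> (tg K n i)) = u \<omega> (real K) - u \<omega> (- real K)"
        using sum_lessThan_telescope[of "\<lambda>i. u \<omega> (tg K n i)" N] unfolding N_def tg_0 tg_N by simp
      show "(\<Sum>i<N. indicator (T i) \<omega> * (u \<omega> (tg K n (Suc i)) - u \<omega> (tg K n i))) \<le> W K n e \<omega>"
      proof (cases "\<exists>i<N. \<omega> \<in> T i")
        case True
        then have "W K n e \<omega> = u \<omega> (real K) - u \<omega> (- real K)"
          unfolding W_def T_def N_def by (auto simp: indicator_def)
        moreover have "(\<Sum>i<N. indicator (T i) \<omega> * (u \<omega> (tg K n (Suc i)) - u \<omega> (tg K n i)))
            \<le> (\<Sum>i<N. u \<omega> (tg K n (Suc i)) - u \<omega> (tg K n i))"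
          by (rule sum_mono) (use nn in \<open>auto simp: indicator_def\<close>)
        ultimately show ?thesis using tel by simp
      next
        case False
        then have "(\<Sum>i<N. indicator (T i) \<omega> * (u \<omega> (tg K n (Suc i)) - u \<omega> (tg K n i))) = 0"
          by (intro sum.neutral) (auto simp: indicator_def)
        moreover have "W K n e \<omega> \<ge> 0" unfolding W_def using u_mono_le[OF w, of "- real K" "real K"] by simp
        ultimately show ?thesis by simp
      qed
    qed
  qed
  finally show ?thesis unfolding N_def .
qed

end

context ctx begin

lemma AE_grid: "AE \<omega> in P. \<exists>n. \<forall>i<2*K*2^n.
         v (- real K + real (Suc i) / 2^n) \<omega> - v (- real K + real i / 2^n) \<omega> < 1 / (real m + 1)"
proof -
  define e :: real where "e = 1 / (real m + 1)"
  have e: "e > 0" unfolding e_def by simp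
  define E where "E n = {\<omega>\<in>space P. \<exists>i<2*K*2^n. v (tg K n (Suc i)) \<omega> - v (tg K n i) \<omega> \<ge> e}" for n
  have EP: "E n \<in> sets P" for n unfolding E_def by measurable
  define Z where "Z = (\<Inter>n. E n)"
  have ZP: "Z \<in> sets P" unfolding Z_def using EP by auto
  have bnd: "measure P Z \<le> 2/e * (\<integral>\<omega>. W K n e \<omega> \<partial>P)" for n
  proof -
    have "measure P Z \<le> measure P (E n)" unfolding Z_def
      by (rule ps.finite_measure_mono) (use EP in auto)
    also have "\<dots> \<le> 2/e * (\<integral>\<omega>. W K n e \<omega> \<partial>P)" unfolding E_def by (rule E_bound[OF e])
    finally show ?thesis .
  qed
  have lim: "(\<lambda>n. 2/e * (\<integral>\<omega>. W K n e \<omega> \<partial>P)) \<longlonglongrightarrow> 2/e * 0"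
    by (intro tendsto_mult tendsto_const W_int_tendsto[OF e])
  have "measure P Z \<le> 2/e * 0"
    by (rule LIMSEQ_le_const[OF lim]) (use bnd in blast)
  then have "measure P Z \<le> 0" by simp
  then have "measure P Z = 0" using measure_nonneg[of P Z] by linarith
  then have "Z \<in> null_sets P" using ZP by (simp add: ps.emeasure_eq_measure null_sets_def)
  from AE_not_in[OF this] show ?thesis
  proof (rule AE_mp[OF _ AE_I2[OF impI]])
    fix \<omega> assume w: "\<omega> \<in> space P" and nz: "\<omega> \<notin> Z"
    then obtain n where "\<omega> \<notin> E n" unfolding Z_def by auto
    with w have "\<forall>i<2*K*2^n. v (tg K n (Suc i)) \<omega> - v (tg K n i) \<omega> < e" unfolding E_def by auto
    then show "\<exists>n. \<forall>i<2*K*2^n.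
         v (- real K + real (Suc i) / 2^n) \<omega> - v (- real K + real i / 2^n) \<omega> < 1 / (real m + 1)"
      unfolding tg_def e_def by blast
  qed
qed

lemma AE_strict: "a < b \<Longrightarrow> AE \<omega> in P. v a \<omega> < v b \<omega>"
  unfolding v_def
  by (rule fms.real_cond_exp_mono_strict[OF AE_I2 uint uint]) (rule u_mono)

lemma AE_v0: "AE \<omega> in P. v 0 \<omega> = 0"
  unfolding v_def
proof (rule fms.real_cond_exp_charact)
  fix A assume A: "A \<in> sets G"
  show "(\<integral>\<omega>\<in>A. u \<omega> 0 \<partial>P) = (\<integral>\<omega>\<in>A. 0 \<partial>P)"
    by (rule set_lebesgue_integral_cong) (use setsG[OF A] sets.sets_into_space u_zero in auto)
qed (auto simp: uint)

lemma AE_good: "AE \<omega> in P. \<omega> \<in> good"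
proof -
  have s: "AE \<omega> in P. \<forall>k::int. \<forall>n::nat. \<forall>k'::int. \<forall>n'::nat. of_int k / 2^n < of_int k' / (2::real)^n' \<longrightarrow>
         v (of_int k / 2^n) \<omega> < v (of_int k' / 2^n') \<omega>"
  proof (subst AE_all_countable, intro allI, subst AE_all_countable, intro allI,
         subst AE_all_countable, intro allI, subst AE_all_countable, intro allI)
    fix k k' :: int and n n' :: nat
    show "AE \<omega> in P. of_int k / 2^n < of_int k' / (2::real)^n' \<longrightarrow>
         v (of_int k / 2^n) \<omega> < v (of_int k' / 2^n') \<omega>"
    proof (cases "of_int k / 2^n < of_int k' / (2::real)^n'")
      case True
      then show ?thesis using AE_strict[OF True] by auto
    qed simp
  qed
  have g: "AE \<omega> in P. \<forall>K::nat. \<forall>m::nat. \<exists>n::nat. \<forall>i<2*K*2^n.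
         v (- real K + real (Suc i) / 2^n) \<omega> - v (- real K + real i / 2^n) \<omega> < 1 / (real m + 1)"
    by (subst AE_all_countable, intro allI, subst AE_all_countable, intro allI) (rule AE_grid)
  from s g AE_v0 AE_space show ?thesis
    by eventually_elim (auto simp: good_def spaceG)
qed

end

context ctx begin

lemma uG_bounds: "\<omega> \<in> good \<Longrightarrow> v (dy 0 x) \<omega> \<le> uG \<omega> x \<and> uG \<omega> x \<le> v (of_int (\<lfloor>x\<rfloor>+1)) \<omega>"
proof
  assume g: "\<omega> \<in> good"
  show "v (dy 0 x) \<omega> \<le> uG \<omega> x" by (rule uG_ge[OF g])
  have "x < of_int (\<lfloor>x\<rfloor>+1)" by linarith
  then show "uG \<omega> x \<le> v (of_int (\<lfloor>x\<rfloor>+1)) \<omega>" by (rule uG_le[OF g isdy_int])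
qed

lemma vdy_bounds: "\<omega> \<in> good \<Longrightarrow> v (dy 0 x) \<omega> \<le> v (dy n x) \<omega> \<and> v (dy n x) \<omega> \<le> v (of_int (\<lfloor>x\<rfloor>+1)) \<omega>"
proof
  assume g: "\<omega> \<in> good"
  have "dy 0 x \<le> dy n x" using dy_incseq[of x] by (simp add: incseq_def)
  then show "v (dy 0 x) \<omega> \<le> v (dy n x) \<omega>" by (rule good_mono[OF g isdy_dy isdy_dy])
  show "v (dy n x) \<omega> \<le> v (of_int (\<lfloor>x\<rfloor>+1)) \<omega>" by (rule good_bdd[OF g])
qed

lemma uG_int: "integrable P (\<lambda>\<omega>. uG \<omega> x)"
proof (rule Bochner_Integration.integrable_bound)
  show "integrable P (\<lambda>\<omega>. \<bar>v (dy 0 x) \<omega>\<bar> + \<bar>v (of_int (\<lfloor>x\<rfloor>+1)) \<omega>\<bar> + \<bar>x\<bar>)"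
    using v_int by auto
  show "(\<lambda>\<omega>. uG \<omega> x) \<in> borel_measurable P" by simp
  show "AE \<omega> in P. norm (uG \<omega> x) \<le> norm (\<bar>v (dy 0 x) \<omega>\<bar> + \<bar>v (of_int (\<lfloor>x\<rfloor>+1)) \<omega>\<bar> + \<bar>x\<bar>)"
  proof (rule AE_I2)
    fix \<omega> assume "\<omega> \<in> space P"
    show "norm (uG \<omega> x) \<le> norm (\<bar>v (dy 0 x) \<omega>\<bar> + \<bar>v (of_int (\<lfloor>x\<rfloor>+1)) \<omega>\<bar> + \<bar>x\<bar>)"
    proof (cases "\<omega> \<in> good")
      case True
      from uG_bounds[OF True, of x] show ?thesis by auto
    next
      case False
      then show ?thesis unfolding uG_def by auto
    qed
  qed
qed

lemma uG_version: assumes A: "A \<in> sets G" shows "(\<integral>\<omega>\<in>A. uG \<omega> x \<partial>P) = (\<integral>\<omega>\<in>A. u \<omega> x \<partial>P)"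
proof -
  have AP: "A \<in> sets P" by (rule setsG[OF A])
  note [measurable] = AP
  have l1: "(\<lambda>n. \<integral>\<omega>. indicator A \<omega> * v (dy n x) \<omega> \<partial>P) \<longlonglongrightarrow> (\<integral>\<omega>. indicator A \<omega> * uG \<omega> x \<partial>P)"
  proof (rule integral_dominated_convergence[where w="\<lambda>\<omega>. \<bar>v (dy 0 x) \<omega>\<bar> + \<bar>v (of_int (\<lfloor>x\<rfloor>+1)) \<omega>\<bar>"])
    show "(\<lambda>\<omega>. indicator A \<omega> * uG \<omega> x) \<in> borel_measurable P" by measurable
    show "(\<lambda>\<omega>. indicator A \<omega> * v (dy n x) \<omega>) \<in> borel_measurable P" for n by measurable
    show "integrable P (\<lambda>\<omega>. \<bar>v (dy 0 x) \<omega>\<bar> + \<bar>v (of_int (\<lfloor>x\<rfloor>+1)) \<omega>\<bar>)" using v_int by auto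
    show "AE \<omega> in P. (\<lambda>n. indicator A \<omega> * v (dy n x) \<omega>) \<longlonglongrightarrow> indicator A \<omega> * uG \<omega> x"
      using AE_good by eventually_elim (intro tendsto_mult tendsto_const uG_tendsto)
    show "AE \<omega> in P. norm (indicator A \<omega> * v (dy n x) \<omega>) \<le> \<bar>v (dy 0 x) \<omega>\<bar> + \<bar>v (of_int (\<lfloor>x\<rfloor>+1)) \<omega>\<bar>" for n
      using AE_good
    proof eventually_elim
      case (elim \<omega>)
      from vdy_bounds[OF elim, of x n] show ?case by (auto simp: indicator_def)
    qed
  qed
  have l2: "(\<lambda>n. \<integral>\<omega>. indicator A \<omega> * u \<omega> (dy n x) \<partial>P) \<longlonglongrightarrow> (\<integral>\<omega>. indicator A \<omega> * u \<omega> x \<partial>P)"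
  proof (rule integral_dominated_convergence[where w="\<lambda>\<omega>. \<bar>u \<omega> (dy 0 x)\<bar> + \<bar>u \<omega> x\<bar>"])
    show "(\<lambda>\<omega>. indicator A \<omega> * u \<omega> x) \<in> borel_measurable P" by measurable
    show "(\<lambda>\<omega>. indicator A \<omega> * u \<omega> (dy n x)) \<in> borel_measurable P" for n by measurable
    show "integrable P (\<lambda>\<omega>. \<bar>u \<omega> (dy 0 x)\<bar> + \<bar>u \<omega> x\<bar>)" using uint by auto
    show "AE \<omega> in P. (\<lambda>n. indicator A \<omega> * u \<omega> (dy n x)) \<longlonglongrightarrow> indicator A \<omega> * u \<omega> x"
    proof (rule AE_I2)
      fix \<omega> assume w: "\<omega> \<in> space P"
      show "(\<lambda>n. indicator A \<omega> * u \<omega> (dy n x)) \<longlonglongrightarrow> indicator A \<omega> * u \<omega> x"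
        by (intro tendsto_mult tendsto_const isCont_tendsto_compose[OF u_cont[OF w] dy_tendsto])
    qed
    show "AE \<omega> in P. norm (indicator A \<omega> * u \<omega> (dy n x)) \<le> \<bar>u \<omega> (dy 0 x)\<bar> + \<bar>u \<omega> x\<bar>" for n
    proof (rule AE_I2)
      fix \<omega> assume w: "\<omega> \<in> space P"
      have "dy 0 x \<le> dy n x" using dy_incseq[of x] by (simp add: incseq_def)
      then have "u \<omega> (dy 0 x) \<le> u \<omega> (dy n x)" by (rule u_mono_le[OF w])
      moreover have "u \<omega> (dy n x) \<le> u \<omega> x" by (rule u_mono_le[OF w dy_le])
      ultimately show "norm (indicator A \<omega> * u \<omega> (dy n x)) \<le> \<bar>u \<omega> (dy 0 x)\<bar> + \<bar>u \<omega> x\<bar>"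
        by (auto simp: indicator_def)
    qed
  qed
  have eq: "(\<integral>\<omega>. indicator A \<omega> * v (dy n x) \<omega> \<partial>P) = (\<integral>\<omega>. indicator A \<omega> * u \<omega> (dy n x) \<partial>P)" for n
    using v_intA[OF A, of "dy n x"] unfolding set_lebesgue_integral_def by simp
  from l1 l2 have "(\<integral>\<omega>. indicator A \<omega> * uG \<omega> x \<partial>P) = (\<integral>\<omega>. indicator A \<omega> * u \<omega> x \<partial>P)"
    unfolding eq by (rule LIMSEQ_unique)
  then show ?thesis unfolding set_lebesgue_integral_def by simp
qed

end

lemma Phi_rat:
  fixes U :: "real \<Rightarrow> real"
  assumes sm: "strict_mono U"
  shows "Inf (ereal ` {y. U y > x}) = (INF r::rat. if U (of_rat r) > x then ereal (of_rat r) else \<infinity>)"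
proof (rule antisym)
  show "Inf (ereal ` {y. U y > x}) \<le> (INF r::rat. if U (of_rat r) > x then ereal (of_rat r) else \<infinity>)"
    by (rule INF_greatest) (auto intro: Inf_lower)
  show "(INF r::rat. if U (of_rat r) > x then ereal (of_rat r) else \<infinity>) \<le> Inf (ereal ` {y. U y > x})"
  proof (rule Inf_greatest)
    fix z assume "z \<in> ereal ` {y. U y > x}"
    then obtain y where y: "U y > x" and z: "z = ereal y" by auto
    show "(INF r::rat. if U (of_rat r) > x then ereal (of_rat r) else \<infinity>) \<le> z"
      unfolding z
    proof (rule ereal_le_epsilon2)
      fix e :: real assume e: "0 < e"
      obtain q where q: "q \<in> \<rat>" "y < q" "q < y + e" using Rats_dense_in_real[of y "y+e"] e by auto
      obtain r where r: "q = of_rat r" using q(1) Rats_cases by blast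
      have "U y < U q" using sm q(2) by (simp add: strict_mono_less)
      then have "U (of_rat r) > x" using y r by simp
      then have "(INF r::rat. if U (of_rat r) > x then ereal (of_rat r) else \<infinity>) \<le> ereal (of_rat r)"
        by (intro INF_lower2[of r]) auto
      also have "\<dots> \<le> ereal y + ereal e" using q r by simp
      finally show "(INF r::rat. if U (of_rat r) > x then ereal (of_rat r) else \<infinity>) \<le> ereal y + ereal e" .
    qed
  qed
qed

lemma Phi_inv:
  fixes U :: "real \<Rightarrow> real"
  assumes sm: "strict_mono U"
  shows "Inf (ereal ` {y. U y > U z}) = ereal z"
proof -
  have "{y. U y > U z} = {z<..}" using sm by (auto simp: strict_mono_less)
  moreover have "Inf (ereal ` {z<..}) = ereal (Inf {z<..})"
    by (rule ereal_Inf'[symmetric]) auto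
  ultimately show ?thesis by simp
qed

context ctx begin

lemma uG_sm: "\<omega> \<in> space P \<Longrightarrow> strict_mono (uG \<omega>)" using uG_regular_pt by blast

lemma PhiG_inv: "\<omega> \<in> space P \<Longrightarrow> PhiG uG \<omega> (uG \<omega> z) = ereal z"
  unfolding PhiG_def by (rule Phi_inv[OF uG_sm])

lemma PhiG_meas: "case_prod (PhiG uG) \<in> borel_measurable (G \<Otimes>\<^sub>M borel)"
proof -
  have m: "(\<lambda>p. INF r::rat. if uG (fst p) (of_rat r) > snd p then ereal (of_rat r) else \<infinity>) \<in> borel_measurable (G \<Otimes>\<^sub>M borel)"
  proof (rule borel_measurable_INF)
    fix r :: rat
    have [measurable]: "(\<lambda>p. uG (fst p) (of_rat r)) \<in> borel_measurable (G \<Otimes>\<^sub>M borel)"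
      using measurable_comp[OF measurable_fst uG_measG[of "of_rat r"]] by (simp add: o_def)
    show "(\<lambda>p. if uG (fst p) (of_rat r) > snd p then ereal (of_rat r) else \<infinity>) \<in> borel_measurable (G \<Otimes>\<^sub>M borel)"
      by measurable
  qed simp
  show ?thesis
  proof (subst measurable_cong)
    fix p :: "'a \<times> real" assume "p \<in> space (G \<Otimes>\<^sub>M borel)"
    then have "fst p \<in> space P" by (auto simp: space_pair_measure spaceG)
    then show "case_prod (PhiG uG) p = (INF r::rat. if uG (fst p) (of_rat r) > snd p then ereal (of_rat r) else \<infinity>)"
      unfolding PhiG_def by (simp add: case_prod_beta Phi_rat[OF uG_sm])
  qed (rule m)
qed

end

lemma dy_meas[measurable]: "dy n \<in> borel_measurable borel"
  unfolding dy_def by measurable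

context ctx begin

lemma uG_comp_measG[measurable]: "g \<in> borel_measurable G \<Longrightarrow> (\<lambda>\<omega>. uG \<omega> (g \<omega>)) \<in> borel_measurable G"
proof -
  assume [measurable]: "g \<in> borel_measurable G"
  have "(\<lambda>\<omega>. (\<omega>, g \<omega>)) \<in> measurable G (G \<Otimes>\<^sub>M borel)" by measurable
  from measurable_comp[OF this uG_meas] show ?thesis by (simp add: o_def)
qed

lemma uG_cont': "\<omega> \<in> space P \<Longrightarrow> isCont (uG \<omega>) x"
  using uG_regular_pt by (auto simp: continuous_on_eq_continuous_at)

lemma uG_mono_le: "\<omega> \<in> space P \<Longrightarrow> x \<le> y \<Longrightarrow> uG \<omega> x \<le> uG \<omega> y"
  using uG_sm[of \<omega>] by (cases "x = y") (auto simp: strict_mono_less_eq)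

lemma step_repr:
  fixes F :: "'a \<Rightarrow> real \<Rightarrow> real" and h :: "'a \<Rightarrow> real"
  assumes w: "\<omega> \<in> space P" and hB: "\<bar>h \<omega>\<bar> \<le> B"
  shows "indicator A \<omega> * F \<omega> (dy n (h \<omega>)) =
    (\<Sum>k\<in>{-(\<lceil>B\<rceil>+1)*2^n..\<lceil>B\<rceil>*2^n}. indicator (A \<inter> {\<omega>\<in>space P. \<lfloor>h \<omega> * 2^n\<rfloor> = k}) \<omega> * F \<omega> (of_int k / 2^n))"
proof -
  define k0 where "k0 = \<lfloor>h \<omega> * 2^n\<rfloor>"
  have p: "(2::real)^n \<ge> 1" by simp
  have hb: "h \<omega> \<le> B \<and> - B \<le> h \<omega>" using hB by (simp add: abs_le_iff)
  have hb1: "h \<omega> \<le> of_int \<lceil>B\<rceil>" using hb le_of_int_ceiling[of B] by linarith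
  have hb2: "- of_int \<lceil>B\<rceil> \<le> h \<omega>" using hb le_of_int_ceiling[of B] by linarith
  have B1: "h \<omega> * 2^n \<le> of_int \<lceil>B\<rceil> * 2^n" using hb1 by (intro mult_right_mono) auto
  have B2: "- (of_int \<lceil>B\<rceil>) * 2^n \<le> h \<omega> * 2^n" using hb2 by (intro mult_right_mono) auto
  have "of_int k0 \<le> h \<omega> * 2^n" unfolding k0_def by simp
  moreover have "real_of_int (\<lceil>B\<rceil>*2^n) = of_int \<lceil>B\<rceil> * 2^n" by simp
  ultimately have "real_of_int k0 \<le> real_of_int (\<lceil>B\<rceil>*2^n)" using B1 by linarith
  then have k1: "k0 \<le> \<lceil>B\<rceil>*2^n" by (simp only: of_int_le_iff)
  have "h \<omega> * 2^n < of_int k0 + 1" unfolding k0_def by linarith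
  moreover have "real_of_int (-(\<lceil>B\<rceil>+1)*2^n) = - of_int \<lceil>B\<rceil> * 2^n - 2^n" by (simp add: algebra_simps)
  ultimately have "real_of_int (-(\<lceil>B\<rceil>+1)*2^n) \<le> real_of_int k0" using B2 p by linarith
  then have k2: "-(\<lceil>B\<rceil>+1)*2^n \<le> k0" by (simp only: of_int_le_iff)
  have "(\<Sum>k\<in>{-(\<lceil>B\<rceil>+1)*2^n..\<lceil>B\<rceil>*2^n}. indicator (A \<inter> {\<omega>\<in>space P. \<lfloor>h \<omega> * 2^n\<rfloor> = k}) \<omega> * F \<omega> (of_int k / 2^n))
      = (\<Sum>k\<in>{-(\<lceil>B\<rceil>+1)*2^n..\<lceil>B\<rceil>*2^n}. if k0 = k then indicator A \<omega> * F \<omega> (of_int k / 2^n) else 0)"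
    using w unfolding k0_def by (intro sum.cong refl) (auto simp: indicator_def)
  also have "\<dots> = indicator A \<omega> * F \<omega> (of_int k0 / 2^n)"
    using k1 k2 by (subst sum.delta') auto
  finally show ?thesis unfolding dy_def k0_def by simp
qed

lemma step_eq:
  assumes hG[measurable]: "h \<in> borel_measurable G" and hB: "\<And>\<omega>. \<omega> \<in> space P \<Longrightarrow> \<bar>h \<omega>\<bar> \<le> B"
    and A: "A \<in> sets G"
  shows "(\<integral>\<omega>. indicator A \<omega> * uG \<omega> (dy n (h \<omega>)) \<partial>P) = (\<integral>\<omega>. indicator A \<omega> * u \<omega> (dy n (h \<omega>)) \<partial>P)"
proof -
  define Ks where "Ks = {-(\<lceil>B\<rceil>+1)*2^n..\<lceil>B\<rceil>*2^n}"
  define C where "C k = A \<inter> {\<omega>\<in>space P. \<lfloor>h \<omega> * 2^n\<rfloor> = k}" for k :: int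
  have CG: "C k \<in> sets G" for k
  proof -
    have "{\<omega>\<in>space G. \<lfloor>h \<omega> * 2^n\<rfloor> = k} \<in> sets G" by measurable
    then show ?thesis unfolding C_def spaceG[symmetric] using A by auto
  qed
  have CP: "C k \<in> sets P" for k by (rule setsG[OF CG])
  have "(\<integral>\<omega>. indicator A \<omega> * uG \<omega> (dy n (h \<omega>)) \<partial>P) = (\<integral>\<omega>. (\<Sum>k\<in>Ks. indicator (C k) \<omega> * uG \<omega> (of_int k / 2^n)) \<partial>P)"
    unfolding Ks_def C_def by (intro Bochner_Integration.integral_cong refl step_repr hB)
  also have "\<dots> = (\<Sum>k\<in>Ks. (\<integral>\<omega>. indicator (C k) \<omega> * uG \<omega> (of_int k / 2^n) \<partial>P))"
    by (rule Bochner_Integration.integral_sum) (rule indint[OF CP uG_int])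
  also have "\<dots> = (\<Sum>k\<in>Ks. (\<integral>\<omega>. indicator (C k) \<omega> * u \<omega> (of_int k / 2^n) \<partial>P))"
  proof (rule sum.cong[OF refl])
    fix k
    show "(\<integral>\<omega>. indicator (C k) \<omega> * uG \<omega> (of_int k / 2^n) \<partial>P) = (\<integral>\<omega>. indicator (C k) \<omega> * u \<omega> (of_int k / 2^n) \<partial>P)"
      using uG_version[OF CG[of k], of "of_int k / 2^n"] unfolding set_lebesgue_integral_def by simp
  qed
  also have "\<dots> = (\<integral>\<omega>. (\<Sum>k\<in>Ks. indicator (C k) \<omega> * u \<omega> (of_int k / 2^n)) \<partial>P)"
    by (rule Bochner_Integration.integral_sum[symmetric]) (rule indint[OF CP uint])
  also have "\<dots> = (\<integral>\<omega>. indicator A \<omega> * u \<omega> (dy n (h \<omega>)) \<partial>P)"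
    unfolding Ks_def C_def by (intro Bochner_Integration.integral_cong refl step_repr[symmetric] hB)
  finally show ?thesis .
qed

lemma plugin:
  assumes hG[measurable]: "h \<in> borel_measurable G" and hB: "\<And>\<omega>. \<omega> \<in> space P \<Longrightarrow> \<bar>h \<omega>\<bar> \<le> B"
    and A: "A \<in> sets G"
  shows "(\<integral>\<omega>. indicator A \<omega> * uG \<omega> (h \<omega>) \<partial>P) = (\<integral>\<omega>. indicator A \<omega> * u \<omega> (h \<omega>) \<partial>P)"
proof -
  have AP[measurable]: "A \<in> sets P" by (rule setsG[OF A])
  have hP[measurable]: "h \<in> borel_measurable P" by (rule measG_P[OF hG])
  have rng: "- B - 1 \<le> dy n (h \<omega>) \<and> dy n (h \<omega>) \<le> B" if w: "\<omega> \<in> space P" for \<omega> n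
  proof
    have "1/2^n \<le> (1::real)" by simp
    then show "- B - 1 \<le> dy n (h \<omega>)" using dy_gt[of "h \<omega>" n] hB[OF w] by linarith
    show "dy n (h \<omega>) \<le> B" using dy_le[of n "h \<omega>"] hB[OF w] by linarith
  qed
  have l1: "(\<lambda>n. \<integral>\<omega>. indicator A \<omega> * uG \<omega> (dy n (h \<omega>)) \<partial>P) \<longlonglongrightarrow> (\<integral>\<omega>. indicator A \<omega> * uG \<omega> (h \<omega>) \<partial>P)"
  proof (rule integral_dominated_convergence[where w="\<lambda>\<omega>. \<bar>uG \<omega> (- B - 1)\<bar> + \<bar>uG \<omega> B\<bar>"])
    show "(\<lambda>\<omega>. indicator A \<omega> * uG \<omega> (h \<omega>)) \<in> borel_measurable P"
      using measG_P[OF uG_comp_measG[OF hG]] by measurable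
    show "(\<lambda>\<omega>. indicator A \<omega> * uG \<omega> (dy n (h \<omega>))) \<in> borel_measurable P" for n
    proof -
      have "(\<lambda>\<omega>. dy n (h \<omega>)) \<in> borel_measurable G" by measurable
      from measG_P[OF uG_comp_measG[OF this]] show ?thesis by measurable
    qed
    show "integrable P (\<lambda>\<omega>. \<bar>uG \<omega> (- B - 1)\<bar> + \<bar>uG \<omega> B\<bar>)" using uG_int by auto
    show "AE \<omega> in P. (\<lambda>n. indicator A \<omega> * uG \<omega> (dy n (h \<omega>))) \<longlonglongrightarrow> indicator A \<omega> * uG \<omega> (h \<omega>)"
    proof (rule AE_I2)
      fix \<omega> assume w: "\<omega> \<in> space P"
      show "(\<lambda>n. indicator A \<omega> * uG \<omega> (dy n (h \<omega>))) \<longlonglongrightarrow> indicator A \<omega> * uG \<omega> (h \<omega>)"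
        by (intro tendsto_mult tendsto_const isCont_tendsto_compose[OF uG_cont'[OF w] dy_tendsto])
    qed
    show "AE \<omega> in P. norm (indicator A \<omega> * uG \<omega> (dy n (h \<omega>))) \<le> \<bar>uG \<omega> (- B - 1)\<bar> + \<bar>uG \<omega> B\<bar>" for n
    proof (rule AE_I2)
      fix \<omega> assume w: "\<omega> \<in> space P"
      have "uG \<omega> (- B - 1) \<le> uG \<omega> (dy n (h \<omega>))" using rng[OF w] by (intro uG_mono_le[OF w]) auto
      moreover have "uG \<omega> (dy n (h \<omega>)) \<le> uG \<omega> B" using rng[OF w] by (intro uG_mono_le[OF w]) auto
      ultimately show "norm (indicator A \<omega> * uG \<omega> (dy n (h \<omega>))) \<le> \<bar>uG \<omega> (- B - 1)\<bar> + \<bar>uG \<omega> B\<bar>"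
        by (auto simp: indicator_def)
    qed
  qed
  have l2: "(\<lambda>n. \<integral>\<omega>. indicator A \<omega> * u \<omega> (dy n (h \<omega>)) \<partial>P) \<longlonglongrightarrow> (\<integral>\<omega>. indicator A \<omega> * u \<omega> (h \<omega>) \<partial>P)"
  proof (rule integral_dominated_convergence[where w="\<lambda>\<omega>. \<bar>u \<omega> (- B - 1)\<bar> + \<bar>u \<omega> B\<bar>"])
    show "(\<lambda>\<omega>. indicator A \<omega> * u \<omega> (h \<omega>)) \<in> borel_measurable P" by measurable
    show "(\<lambda>\<omega>. indicator A \<omega> * u \<omega> (dy n (h \<omega>))) \<in> borel_measurable P" for n by measurable
    show "integrable P (\<lambda>\<omega>. \<bar>u \<omega> (- B - 1)\<bar> + \<bar>u \<omega> B\<bar>)" using uint by auto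
    show "AE \<omega> in P. (\<lambda>n. indicator A \<omega> * u \<omega> (dy n (h \<omega>))) \<longlonglongrightarrow> indicator A \<omega> * u \<omega> (h \<omega>)"
    proof (rule AE_I2)
      fix \<omega> assume w: "\<omega> \<in> space P"
      show "(\<lambda>n. indicator A \<omega> * u \<omega> (dy n (h \<omega>))) \<longlonglongrightarrow> indicator A \<omega> * u \<omega> (h \<omega>)"
        by (intro tendsto_mult tendsto_const isCont_tendsto_compose[OF u_cont[OF w] dy_tendsto])
    qed
    show "AE \<omega> in P. norm (indicator A \<omega> * u \<omega> (dy n (h \<omega>))) \<le> \<bar>u \<omega> (- B - 1)\<bar> + \<bar>u \<omega> B\<bar>" for n
    proof (rule AE_I2)
      fix \<omega> assume w: "\<omega> \<in> space P"
      have "u \<omega> (- B - 1) \<le> u \<omega> (dy n (h \<omega>))" using rng[OF w] by (intro u_mono_le[OF w]) auto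
      moreover have "u \<omega> (dy n (h \<omega>)) \<le> u \<omega> B" using rng[OF w] by (intro u_mono_le[OF w]) auto
      ultimately show "norm (indicator A \<omega> * u \<omega> (dy n (h \<omega>))) \<le> \<bar>u \<omega> (- B - 1)\<bar> + \<bar>u \<omega> B\<bar>"
        by (auto simp: indicator_def)
    qed
  qed
  have eq: "(\<integral>\<omega>. indicator A \<omega> * uG \<omega> (dy n (h \<omega>)) \<partial>P) = (\<integral>\<omega>. indicator A \<omega> * u \<omega> (dy n (h \<omega>)) \<partial>P)" for n
    by (rule step_eq[OF hG hB A])
  from l1 l2 show ?thesis unfolding eq by (rule LIMSEQ_unique)
qed

end

context ctx begin

lemma final:
  assumes fP[measurable]: "f \<in> borel_measurable P" and fB: "\<And>\<omega>. \<omega> \<in> space P \<Longrightarrow> \<bar>f \<omega>\<bar> \<le> B"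
  shows "\<exists>g. cond_exp_version P G (\<lambda>\<omega>. u \<omega> (f \<omega>)) g \<and>
    (\<exists>h. h \<in> borel_measurable G \<and> (\<forall>\<omega>\<in>space P. \<bar>h \<omega>\<bar> \<le> real (nat \<lceil>B\<rceil>)) \<and>
      (\<forall>A\<in>sets G. (\<integral>\<omega>. indicator A \<omega> * u \<omega> (f \<omega>) \<partial>P) = (\<integral>\<omega>. indicator A \<omega> * u \<omega> (h \<omega>) \<partial>P)) \<and>
      (\<forall>\<omega>\<in>space P. PhiG uG \<omega> (g \<omega>) = ereal (h \<omega>)))"
proof -
  define Bn where "Bn = real (nat \<lceil>B\<rceil>)"
  have Bn0: "Bn \<ge> 0" unfolding Bn_def by simp
  have fBn: "- Bn \<le> f \<omega> \<and> f \<omega> \<le> Bn" if "\<omega> \<in> space P" for \<omega>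
    using fB[OF that] unfolding Bn_def by (auto simp: abs_le_iff) linarith+
  have BnI: "Bn = of_int (int (nat \<lceil>B\<rceil>))" unfolding Bn_def by (simp only: of_int_of_nat_eq)
  have dyB1: "isdy Bn" unfolding BnI by (rule isdy_int)
  have BnI2: "- Bn = of_int (- int (nat \<lceil>B\<rceil>))" unfolding BnI by simp
  have dyB2: "isdy (- Bn)" unfolding BnI2 by (rule isdy_int)
  have ufi: "integrable P (\<lambda>\<omega>. u \<omega> (f \<omega>))"
  proof (rule Bochner_Integration.integrable_bound)
    show "integrable P (\<lambda>\<omega>. \<bar>u \<omega> (- Bn)\<bar> + \<bar>u \<omega> Bn\<bar>)" using uint by auto
    show "(\<lambda>\<omega>. u \<omega> (f \<omega>)) \<in> borel_measurable P" by measurable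
    show "AE \<omega> in P. norm (u \<omega> (f \<omega>)) \<le> norm (\<bar>u \<omega> (- Bn)\<bar> + \<bar>u \<omega> Bn\<bar>)"
    proof (rule AE_I2)
      fix \<omega> assume w: "\<omega> \<in> space P"
      have "u \<omega> (- Bn) \<le> u \<omega> (f \<omega>)" "u \<omega> (f \<omega>) \<le> u \<omega> Bn" using fBn[OF w] u_mono_le[OF w] by auto
      then show "norm (u \<omega> (f \<omega>)) \<le> norm (\<bar>u \<omega> (- Bn)\<bar> + \<bar>u \<omega> Bn\<bar>)" by auto
    qed
  qed
  define c where "c = real_cond_exp P G (\<lambda>\<omega>. u \<omega> (f \<omega>))"
  have cG[measurable]: "c \<in> borel_measurable G" unfolding c_def by simp
  have cP[measurable]: "c \<in> borel_measurable P" unfolding c_def by simp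
  have c1: "AE \<omega> in P. v (- Bn) \<omega> \<le> c \<omega>" unfolding c_def v_def
    by (rule fms.real_cond_exp_mono[OF AE_I2 uint ufi]) (use fBn u_mono_le in auto)
  have c2: "AE \<omega> in P. c \<omega> \<le> v Bn \<omega>" unfolding c_def v_def
    by (rule fms.real_cond_exp_mono[OF AE_I2 ufi uint]) (use fBn u_mono_le in auto)
  define c' where "c' \<omega> = max (uG \<omega> (- Bn)) (min (uG \<omega> Bn) (c \<omega>))" for \<omega>
  have c'G[measurable]: "c' \<in> borel_measurable G" unfolding c'_def by measurable
  have c'P[measurable]: "c' \<in> borel_measurable P" by (rule measG_P[OF c'G])
  have AEc: "AE \<omega> in P. c' \<omega> = c \<omega>"
    using c1 c2 AE_good
  proof eventually_elim
    case (elim \<omega>)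
    then show ?case unfolding c'_def using uG_dy[OF elim(3) dyB1] uG_dy[OF elim(3) dyB2] by auto
  qed
  have c'rng: "uG \<omega> (- Bn) \<le> c' \<omega> \<and> c' \<omega> \<le> uG \<omega> Bn" if w: "\<omega> \<in> space P" for \<omega>
  proof -
    have "uG \<omega> (- Bn) \<le> uG \<omega> Bn" using Bn0 by (intro uG_mono_le[OF w]) auto
    then show ?thesis unfolding c'_def by auto
  qed
  define h where "h \<omega> = (SOME y. - Bn \<le> y \<and> y \<le> Bn \<and> uG \<omega> y = c' \<omega>)" for \<omega>
  have hprop: "- Bn \<le> h \<omega> \<and> h \<omega> \<le> Bn \<and> uG \<omega> (h \<omega>) = c' \<omega>" if w: "\<omega> \<in> space P" for \<omega>
  proof -
    have "continuous_on {- Bn..Bn} (uG \<omega>)"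
      using uG_regular_pt[OF w] by (auto intro: continuous_on_subset)
    then have "\<exists>y\<ge>- Bn. y \<le> Bn \<and> uG \<omega> y = c' \<omega>"
      using c'rng[OF w] Bn0 by (intro IVT') auto
    then have "\<exists>y. - Bn \<le> y \<and> y \<le> Bn \<and> uG \<omega> y = c' \<omega>" by blast
    then show ?thesis unfolding h_def by (rule someI_ex)
  qed
  have hG: "h \<in> borel_measurable G"
  proof (subst borel_measurable_iff_le, intro allI)
    fix t
    have "{\<omega> \<in> space G. h \<omega> \<le> t} = {\<omega> \<in> space G. c' \<omega> \<le> uG \<omega> t}"
    proof (intro Collect_cong conj_cong refl)
      fix \<omega> assume "\<omega> \<in> space G"
      then have w: "\<omega> \<in> space P" using spaceG by simp
      show "(h \<omega> \<le> t) = (c' \<omega> \<le> uG \<omega> t)"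
        using hprop[OF w] uG_sm[OF w] by (metis strict_mono_less_eq)
    qed
    also have "\<dots> \<in> sets G" by measurable
    finally show "{\<omega> \<in> space G. h \<omega> \<le> t} \<in> sets G" .
  qed
  have hB: "\<bar>h \<omega>\<bar> \<le> Bn" if "\<omega> \<in> space P" for \<omega> using hprop[OF that] by auto
  show ?thesis
  proof (intro exI conjI)
    show "cond_exp_version P G (\<lambda>\<omega>. u \<omega> (f \<omega>)) c'"
      unfolding cond_exp_version_def
    proof (intro conjI ballI)
      show "c' \<in> borel_measurable G" by simp
      show "integrable P c'"
        by (rule integrable_cong_AE_imp[OF fms.real_cond_exp_int(1)[OF ufi] c'P]) (use AEc in \<open>auto simp: c_def\<close>)
      fix A assume A: "A \<in> sets G"
      note [measurable] = setsG[OF A]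
      have "(\<integral>\<omega>\<in>A. c' \<omega> \<partial>P) = (\<integral>\<omega>\<in>A. c \<omega> \<partial>P)"
        unfolding set_lebesgue_integral_def
        by (rule integral_cong_AE) (measurable, use AEc in auto)
      also have "\<dots> = (\<integral>\<omega>\<in>A. u \<omega> (f \<omega>) \<partial>P)" unfolding c_def
        by (rule fms.real_cond_exp_intA[OF ufi A, symmetric])
      finally show "(\<integral>\<omega>\<in>A. c' \<omega> \<partial>P) = (\<integral>\<omega>\<in>A. u \<omega> (f \<omega>) \<partial>P)" .
    qed
    show "h \<in> borel_measurable G" by (rule hG)
    show "\<forall>\<omega>\<in>space P. \<bar>h \<omega>\<bar> \<le> real (nat \<lceil>B\<rceil>)" using hB unfolding Bn_def by blast
    show "\<forall>\<omega>\<in>space P. PhiG uG \<omega> (c' \<omega>) = ereal (h \<omega>)"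
      using hprop PhiG_inv by metis
    show "\<forall>A\<in>sets G. (\<integral>\<omega>. indicator A \<omega> * u \<omega> (f \<omega>) \<partial>P) = (\<integral>\<omega>. indicator A \<omega> * u \<omega> (h \<omega>) \<partial>P)"
    proof
      fix A assume A: "A \<in> sets G"
      note [measurable] = setsG[OF A]
      have "(\<integral>\<omega>. indicator A \<omega> * u \<omega> (f \<omega>) \<partial>P) = (\<integral>\<omega>\<in>A. c \<omega> \<partial>P)"
        using fms.real_cond_exp_intA[OF ufi A] unfolding c_def set_lebesgue_integral_def by simp
      also have "\<dots> = (\<integral>\<omega>. indicator A \<omega> * c' \<omega> \<partial>P)"
        unfolding set_lebesgue_integral_def
        by (rule integral_cong_AE) (measurable, use AEc in auto)
      also have "\<dots> = (\<integral>\<omega>. indicator A \<omega> * uG \<omega> (h \<omega>) \<partial>P)"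
        by (rule Bochner_Integration.integral_cong) (use hprop in auto)
      also have "\<dots> = (\<integral>\<omega>. indicator A \<omega> * u \<omega> (h \<omega>) \<partial>P)"
        by (rule plugin[OF hG hB A])
      finally show "(\<integral>\<omega>. indicator A \<omega> * u \<omega> (f \<omega>) \<partial>P) = (\<integral>\<omega>. indicator A \<omega> * u \<omega> (h \<omega>) \<partial>P)" .
    qed
  qed
qed

end

theorem mainTheorem5:
  fixes M P :: "'a measure"
    and R :: "('a \<Rightarrow> real) \<Rightarrow> ('a \<Rightarrow> real) \<Rightarrow> bool"
    and u :: "'a \<Rightarrow> real \<Rightarrow> real"
  assumes three: "\<exists>A B C. A \<in> sets M \<and> B \<in> sets M \<and> C \<in> sets M \<and>
      A \<inter> B = {} \<and> A \<inter> C = {} \<and> B \<inter> C = {} \<and>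
      A \<notin> null_events M R \<and> B \<notin> null_events M R \<and> C \<notin> null_events M R"
    and pref: "preference_order M R"
    and sm: "SM M R" and pc: "PC M R" and st: "ST M R"
    and prob: "prob_space P" and setsP: "sets P = sets M"
    and nullP: "null_events M R = {A \<in> sets M. measure P A = 0}"
    and ureg: "regular M u"
    and uint: "\<And>x. integrable P (\<lambda>\<omega>. u \<omega> x)"
    and repr: "\<And>f g. f \<in> Linf M \<Longrightarrow> g \<in> Linf M \<Longrightarrow>
        R f g \<longleftrightarrow> (\<integral>\<omega>. u \<omega> (f \<omega>) \<partial>P) \<ge> (\<integral>\<omega>. u \<omega> (g \<omega>) \<partial>P)"
  shows "\<forall>G f. subalgebra M G \<and> f \<in> Linf M \<longrightarrow>
      chisini G R f \<noteq> {} \<and>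
      (\<exists>uG. regular G uG \<and>
         (\<forall>x. (\<lambda>\<omega>. uG \<omega> x) \<in> borel_measurable G \<and> integrable P (\<lambda>\<omega>. uG \<omega> x) \<and>
              cond_exp_version P G (\<lambda>\<omega>. u \<omega> x) (\<lambda>\<omega>. uG \<omega> x)) \<and>
         case_prod (PhiG uG) \<in> borel_measurable (G \<Otimes>\<^sub>M borel) \<and>
         (\<exists>g. cond_exp_version P G (\<lambda>\<omega>. u \<omega> (f \<omega>)) g \<and>
              (\<exists>h\<in>chisini G R f. \<forall>\<omega>\<in>space M. PhiG uG \<omega> (g \<omega>) = ereal (h \<omega>))))"
proof (intro allI impI)
  fix G :: "'a measure" and f :: "'a \<Rightarrow> real"
  assume H: "subalgebra M G \<and> f \<in> Linf M"
  have spP: "space P = space M" using setsP by (rule sets_eq_imp_space_eq)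
  have sub: "subalgebra P G" using H setsP spP unfolding subalgebra_def by auto
  have ureg': "\<And>\<omega>. \<omega> \<in> space P \<Longrightarrow> continuous_on UNIV (u \<omega>) \<and> strict_mono (u \<omega>) \<and> u \<omega> 0 = 0"
    using ureg spP unfolding regular_def by auto
  have umP: "case_prod u \<in> borel_measurable (P \<Otimes>\<^sub>M borel)"
  proof -
    have "case_prod u \<in> borel_measurable (M \<Otimes>\<^sub>M borel)" using ureg unfolding regular_def by auto
    moreover have "sets (P \<Otimes>\<^sub>M (borel::real measure)) = sets (M \<Otimes>\<^sub>M (borel::real measure))"
      by (rule sets_pair_measure_cong[OF setsP refl])
    then have "(borel_measurable (P \<Otimes>\<^sub>M (borel::real measure)) :: ('a \<times> real \<Rightarrow> real) set) = borel_measurable (M \<Otimes>\<^sub>M borel)"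
      by (rule measurable_cong_sets) (rule refl)
    ultimately show ?thesis by simp
  qed
  interpret ctx P G u
    by (rule ctx.intro[OF prob sub ureg' umP uint])
  have measMP: "\<And>g::'a \<Rightarrow> real. g \<in> borel_measurable P \<longleftrightarrow> g \<in> borel_measurable M"
    using measurable_cong_sets[OF setsP refl[of "sets (borel::real measure)"]] by simp
  from H obtain B where fM: "f \<in> borel_measurable M" and fB: "\<And>\<omega>. \<omega> \<in> space M \<Longrightarrow> \<bar>f \<omega>\<bar> \<le> B"
    unfolding Linf_def by auto
  have fP: "f \<in> borel_measurable P" using fM measMP by simp
  obtain g h where gv: "cond_exp_version P G (\<lambda>\<omega>. u \<omega> (f \<omega>)) g"
    and hG: "h \<in> borel_measurable G" and hB: "\<forall>\<omega>\<in>space P. \<bar>h \<omega>\<bar> \<le> real (nat \<lceil>B\<rceil>)"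
    and hI: "\<forall>A\<in>sets G. (\<integral>\<omega>. indicator A \<omega> * u \<omega> (f \<omega>) \<partial>P) = (\<integral>\<omega>. indicator A \<omega> * u \<omega> (h \<omega>) \<partial>P)"
    and hPhi: "\<forall>\<omega>\<in>space P. PhiG uG \<omega> (g \<omega>) = ereal (h \<omega>)"
    using final[OF fP, of B] fB spP by blast
  have hP: "h \<in> borel_measurable P" by (rule measG_P[OF hG])
  have hch: "h \<in> chisini G R f"
    unfolding chisini_def
  proof (intro CollectI conjI ballI)
    show "h \<in> Linf G" unfolding Linf_def using hG hB spaceG by auto
    fix A assume A: "A \<in> sets G"
    have AM: "A \<in> sets M" using setsG[OF A] setsP by simp
    have L1: "(\<lambda>\<omega>. f \<omega> * indicator A \<omega>) \<in> Linf M"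
      unfolding Linf_def using fM AM fB by (auto intro!: exI[of _ B] simp: indicator_def intro: order_trans[OF abs_ge_zero])
    have L2: "(\<lambda>\<omega>. h \<omega> * indicator A \<omega>) \<in> Linf M"
    proof -
      have "(\<lambda>\<omega>. h \<omega> * indicator A \<omega>) \<in> borel_measurable P" using hP setsG[OF A] by measurable
      then have "(\<lambda>\<omega>. h \<omega> * indicator A \<omega>) \<in> borel_measurable M" using measMP by simp
      then show ?thesis unfolding Linf_def using hB spP
        by (auto intro!: exI[of _ "real (nat \<lceil>B\<rceil>)"] simp: indicator_def)
    qed
    have e1: "(\<integral>\<omega>. u \<omega> (f \<omega> * indicator A \<omega>) \<partial>P) = (\<integral>\<omega>. indicator A \<omega> * u \<omega> (f \<omega>) \<partial>P)"
      by (rule Bochner_Integration.integral_cong) (auto simp: indicator_def u_zero)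
    have e2: "(\<integral>\<omega>. u \<omega> (h \<omega> * indicator A \<omega>) \<partial>P) = (\<integral>\<omega>. indicator A \<omega> * u \<omega> (h \<omega>) \<partial>P)"
      by (rule Bochner_Integration.integral_cong) (auto simp: indicator_def u_zero)
    have "(\<integral>\<omega>. u \<omega> (f \<omega> * indicator A \<omega>) \<partial>P) = (\<integral>\<omega>. u \<omega> (h \<omega> * indicator A \<omega>) \<partial>P)"
      unfolding e1 e2 using hI A by blast
    then show "pindiff R (\<lambda>\<omega>. f \<omega> * indicator A \<omega>) (\<lambda>\<omega>. h \<omega> * indicator A \<omega>)"
      unfolding pindiff_def using repr[OF L1 L2] repr[OF L2 L1] by simp
  qed
  show "chisini G R f \<noteq> {} \<and>
      (\<exists>uG. regular G uG \<and>
         (\<forall>x. (\<lambda>\<omega>. uG \<omega> x) \<in> borel_measurable G \<and> integrable P (\<lambda>\<omega>. uG \<omega> x) \<and>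
              cond_exp_version P G (\<lambda>\<omega>. u \<omega> x) (\<lambda>\<omega>. uG \<omega> x)) \<and>
         case_prod (PhiG uG) \<in> borel_measurable (G \<Otimes>\<^sub>M borel) \<and>
         (\<exists>g. cond_exp_version P G (\<lambda>\<omega>. u \<omega> (f \<omega>)) g \<and>
              (\<exists>h\<in>chisini G R f. \<forall>\<omega>\<in>space M. PhiG uG \<omega> (g \<omega>) = ereal (h \<omega>))))"
  proof (intro conjI exI)
    show "chisini G R f \<noteq> {}" using hch by blast
    show "regular G uG" unfolding regular_def using uG_regular_pt spaceG uG_meas by auto
    show "\<forall>x. (\<lambda>\<omega>. uG \<omega> x) \<in> borel_measurable G \<and> integrable P (\<lambda>\<omega>. uG \<omega> x) \<and>
              cond_exp_version P G (\<lambda>\<omega>. u \<omega> x) (\<lambda>\<omega>. uG \<omega> x)"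
      unfolding cond_exp_version_def using uG_measG uG_int uG_version by blast
    show "case_prod (PhiG uG) \<in> borel_measurable (G \<Otimes>\<^sub>M borel)" by (rule PhiG_meas)
    show "cond_exp_version P G (\<lambda>\<omega>. u \<omega> (f \<omega>)) g" by (rule gv)
    show "\<exists>h\<in>chisini G R f. \<forall>\<omega>\<in>space M. PhiG uG \<omega> (g \<omega>) = ereal (h \<omega>)"
      using hch hPhi spP by auto
  qed
qed

end
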